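(* Assume [Existence] and [Argmax] (see context). Then the MLE of $\theta$ exists: there is at least one $\hat\theta_n\in\mathcal{K}$ with $K^{\hat\delta_n,\hat\theta_n}_n(\omega^*_{\Lambda_n})=\min_{\theta\in\mathcal{K}}K^{\hat\delta_n,\theta}_n(\omega^*_{\Lambda_n})$.
   Context: Setting: $I=[\delta_{\min},\delta_{\max}]$, $0\le\delta_{\min}\le\delta_{\max}\le\infty$; $\emptyset\ne\Theta\subset\mathbb{R}^p$; $\mathcal{K}\subset\Theta$ compact. Configurations are locally finite subsets of $\mathbb{R}^d$; $\omega_\Lambda=\omega\cap\Lambda$; $\pi_\Lambda$ is the unit-intensity Poisson process on bounded $\Lambda$; $\Lambda_n=[-n,n]^d$; $\Omega_T=\{\omega:\exists t>0\ \forall n\ge1,\sum_{i\in\{-n,\dots,n-1\}^d}N_{i+[0,1]^d}(\omega)^2\le t(2n)^d\}$; $\Omega^\delta_\infty=\{\omega:\inf_{x\ne y\in\omega}|x-y|\ge\delta\}$. For each $\theta$, $(H^\theta_\Lambda)_\Lambda$ are finite-valued measurable energies on $\Omega_T$ with $H^\theta_{\Lambda'}(\omega)=H^\theta_\Lambda(\omega)+\varphi_{\Lambda,\Lambda'}(\omega_{\Lambda^c})$ for $\Lambda\subset\Lambda'$. Conditional densities $f^{\delta,\theta}_\Lambda=e^{-H^\theta_\Lambda}\mathbb{1}_{\Omega^\delta_\infty}/Z^{\delta,\theta}_\Lambda(\omega_{\Lambda^c})$ with $Z^{\delta,\theta}_\Lambda(\omega_{\Lambda^c})=\int e^{-H^\theta_\Lambda(\omega'_\Lambda\cup\omega_{\Lambda^c})}\mathbb{1}_{\Omega^\delta_\infty}(\omega'_\Lambda\cup\omega_{\Lambda^c})\pi_\Lambda(d\omega'_\Lambda)$;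 $\mathcal{G}^{\delta,\theta}$ = stationary finite-intensity Gibbs measures (probabilities $P$ with $P(\Omega^\delta_\infty\cap\Omega_T)=1$ satisfying the DLR equations with these densities). $\omega^*$ is a realization of some $P\in\mathcal{G}^{\delta^*,\theta^*}$. [Existence]: for all $\delta\in I,\theta\in\Theta$, bounded $\Lambda$, $\omega\in\Omega^\delta_\infty\cap\Omega_T$: $Z^{\delta,\theta}_\Lambda(\omega_{\Lambda^c})<\infty$ and $\mathcal{G}^{\delta,\theta}\ne\emptyset$. [Argmax]: for all $\omega\in\Omega_T$, $n\ge1$, $\theta\mapsto H^\theta_{\Lambda_n}(\omega_{\Lambda_n})$ is lower semicontinuous on $\mathcal{K}$ and there is an upper semicontinuous version $\tilde H^\theta_{\Lambda_n}$ with $\tilde H^\theta_{\Lambda_n}=H^\theta_{\Lambda_n}$ $\pi_{\Lambda_n}$-a.s. for each $\theta\in\mathcal{K}$. Free-boundary partition function $Z^{\delta,\theta}_{\Lambda}=\int e^{-H^\theta_\Lambda(\omega_\Lambda)}\mathbb{1}_{\Omega^\delta_\infty}(\omega_\Lambda)\pi_\Lambda(d\omega_\Lambda)$. Contrast: $K^{\delta,\theta}_n(\omega_{\Lambda_n})=|\Lambda_n|^{-1}\ln Z^{\delta,\theta}_{\Lambda_n}+|\Lambda_n|^{-1}H^\theta_{\Lambda_n}(\omega_{\Lambda_n})+\infty\cdot\mathbb{1}_{\tilde\delta_n(\omega_{\Lambda_n})<\delta}$ where $\tilde\delta_n(\omega_{\Lambda_n})$ is the minimal distance between two distinct points of $\omega_{\Lambda_n}$.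 $\hat\delta_n=\tilde\delta_n(\omega^*_{\Lambda_n})$ if this lies in $I$, and $\hat\delta_n=\delta_{\max}$ otherwise. *)

theory Defs
  imports "HOL-Analysis.Analysis"
begin

definition lsc_on :: "'b::topological_space set \<Rightarrow> ('b \<Rightarrow> real) \<Rightarrow> bool" where
  "lsc_on S f \<longleftrightarrow> (\<forall>x\<in>S. \<forall>y. y < f x \<longrightarrow> (\<forall>\<^sub>F z in at x within S. y < f z))"

definition usc_on :: "'b::topological_space set \<Rightarrow> ('b \<Rightarrow> real) \<Rightarrow> bool" where
  "usc_on S f \<longleftrightarrow> (\<forall>x\<in>S. \<forall>y. f x < y \<longrightarrow> (\<forall>\<^sub>F z in at x within S. f z < y))"

definition locally_finite_conf :: "'a::euclidean_space set \<Rightarrow> bool" where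
  "locally_finite_conf \<omega> \<longleftrightarrow> (\<forall>B. bounded B \<longrightarrow> finite (\<omega> \<inter> B))"

definition Conf :: "'a::euclidean_space set set" where
  "Conf = {\<omega>. locally_finite_conf \<omega>}"

definition Ncount :: "'a set \<Rightarrow> 'a set \<Rightarrow> nat" where
  "Ncount B \<omega> = card (\<omega> \<inter> B)"

definition conf_space :: "'a::euclidean_space set measure" where
  "conf_space = sigma Conf
     {{\<omega>\<in>Conf. Ncount B \<omega> = k} | B k. B \<in> sets borel \<and> bounded B}"

definition bounded_borel :: "'a::euclidean_space set \<Rightarrow> bool" where
  "bounded_borel \<Lambda> \<longleftrightarrow> \<Lambda> \<in> sets borel \<and> bounded \<Lambda>"

text \<open>Unit-intensity Poisson point process on a bounded Borel set \<Lambda>: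
  pi_\<Lambda>(A) = e^{-|\<Lambda>|} \<Sum>_k (1/k!) \<integral>_{\<Lambda>^k} 1_A({x_1,...,x_k}) dx.\<close>
definition pois :: "'a::euclidean_space set \<Rightarrow> 'a set measure" where
  "pois \<Lambda> = measure_of (space conf_space) (sets conf_space)
     (\<lambda>A. ennreal (exp (- measure lborel \<Lambda>)) *
        (\<Sum>k. emeasure (PiM {..<k} (\<lambda>_. restrict_space lborel \<Lambda>))
                 ((\<lambda>x. x ` {..<k}) -` A \<inter> space (PiM {..<k} (\<lambda>_. restrict_space lborel \<Lambda>)))
               / ennreal (fact k)))"

definition Lam :: "nat \<Rightarrow> 'a::euclidean_space set" where
  "Lam n = cbox (- (real n *\<^sub>R One)) (real n *\<^sub>R One)"

definition lattice_idx :: "nat \<Rightarrow> 'a::euclidean_space set" where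
  "lattice_idx n = {i. \<forall>b\<in>Basis. i \<bullet> b \<in> \<int> \<and> - real n \<le> i \<bullet> b \<and> i \<bullet> b \<le> real n - 1}"

definition OmegaT :: "'a::euclidean_space set set" where
  "OmegaT = {\<omega>\<in>Conf. \<exists>t>0. \<forall>n\<ge>1.
      (\<Sum>i\<in>lattice_idx n. real (Ncount (cbox i (i + One)) \<omega>) ^ 2)
        \<le> t * (2 * real n) ^ DIM('a)}"

definition OmegaHC :: "ereal \<Rightarrow> 'a::euclidean_space set set" where
  "OmegaHC \<delta> = {\<omega>. \<forall>x\<in>\<omega>. \<forall>y\<in>\<omega>. x \<noteq> y \<longrightarrow> \<delta> \<le> ereal (dist x y)}"

text \<open>H \<theta> \<Lambda> \<omega> stands for H^\<theta>_\<Lambda>(\<omega>).\<close>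
definition energy_family ::
  "'b set \<Rightarrow> ('b \<Rightarrow> 'a::euclidean_space set \<Rightarrow> 'a set \<Rightarrow> real) \<Rightarrow> bool" where
  "energy_family \<Theta> H \<longleftrightarrow> (\<forall>\<theta>\<in>\<Theta>.
     (\<forall>\<Lambda>. bounded_borel \<Lambda> \<longrightarrow> H \<theta> \<Lambda> \<in> borel_measurable (restrict_space conf_space OmegaT)) \<and>
     (\<forall>\<Lambda> \<Lambda>'. bounded_borel \<Lambda> \<longrightarrow> bounded_borel \<Lambda>' \<longrightarrow> \<Lambda> \<subseteq> \<Lambda>' \<longrightarrow>
        (\<exists>\<phi>. \<forall>\<omega>\<in>OmegaT. H \<theta> \<Lambda>' \<omega> = H \<theta> \<Lambda> \<omega> + \<phi> (\<omega> - \<Lambda>))))"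

definition Zcond :: "('b \<Rightarrow> 'a::euclidean_space set \<Rightarrow> 'a set \<Rightarrow> real) \<Rightarrow> ereal \<Rightarrow> 'b
     \<Rightarrow> 'a set \<Rightarrow> 'a set \<Rightarrow> ennreal" where
  "Zcond H \<delta> \<theta> \<Lambda> \<omega> = (\<integral>\<^sup>+ \<omega>'. ennreal (exp (- H \<theta> \<Lambda> ((\<omega>' \<inter> \<Lambda>) \<union> (\<omega> - \<Lambda>))))
        * indicator (OmegaHC \<delta>) ((\<omega>' \<inter> \<Lambda>) \<union> (\<omega> - \<Lambda>)) \<partial>pois \<Lambda>)"

definition cond_density :: "('b \<Rightarrow> 'a::euclidean_space set \<Rightarrow> 'a set \<Rightarrow> real) \<Rightarrow> ereal \<Rightarrow> 'b
     \<Rightarrow> 'a set \<Rightarrow> 'a set \<Rightarrow> ennreal" where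
  "cond_density H \<delta> \<theta> \<Lambda> \<omega> =
     ennreal (exp (- H \<theta> \<Lambda> \<omega>)) * indicator (OmegaHC \<delta>) \<omega> / Zcond H \<delta> \<theta> \<Lambda> \<omega>"

text \<open>Stationary, finite-intensity Gibbs measures (DLR equations).\<close>
definition gibbs :: "('b \<Rightarrow> 'a::euclidean_space set \<Rightarrow> 'a set \<Rightarrow> real) \<Rightarrow> ereal \<Rightarrow> 'b
     \<Rightarrow> 'a set measure set" where
  "gibbs H \<delta> \<theta> = {P. sets P = sets conf_space \<and> emeasure P (space P) = 1 \<and>
     (AE \<omega> in P. \<omega> \<in> OmegaHC \<delta> \<inter> OmegaT) \<and>
     (\<forall>u. distr P conf_space (\<lambda>\<omega>. (+) u ` \<omega>) = P) \<and>
     (\<integral>\<^sup>+ \<omega>. of_nat (Ncount (cbox 0 One) \<omega>) \<partial>P) < \<infinity> \<and>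
     (\<forall>\<Lambda>. bounded_borel \<Lambda> \<longrightarrow>
        (\<forall>F \<in> borel_measurable conf_space.
           (\<integral>\<^sup>+ \<omega>. F \<omega> \<partial>P) =
           (\<integral>\<^sup>+ \<omega>. (\<integral>\<^sup>+ \<omega>'. F ((\<omega>' \<inter> \<Lambda>) \<union> (\<omega> - \<Lambda>))
                 * cond_density H \<delta> \<theta> \<Lambda> ((\<omega>' \<inter> \<Lambda>) \<union> (\<omega> - \<Lambda>)) \<partial>pois \<Lambda>) \<partial>P)))}"

definition Zfree :: "('b \<Rightarrow> 'a::euclidean_space set \<Rightarrow> 'a set \<Rightarrow> real) \<Rightarrow> ereal \<Rightarrow> 'b
     \<Rightarrow> 'a set \<Rightarrow> ennreal" where
  "Zfree H \<delta> \<theta> \<Lambda> = (\<integral>\<^sup>+ \<omega>. ennreal (exp (- H \<theta> \<Lambda> (\<omega> \<inter> \<Lambda>)))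
        * indicator (OmegaHC \<delta>) (\<omega> \<inter> \<Lambda>) \<partial>pois \<Lambda>)"

text \<open>Minimal distance between two distinct points (+\<infinity> if fewer than two points).\<close>
definition min_dist :: "'a::euclidean_space set \<Rightarrow> ereal" where
  "min_dist \<omega> = Inf {ereal (dist x y) | x y. x \<in> \<omega> \<and> y \<in> \<omega> \<and> x \<noteq> y}"

text \<open>K^{\<delta>,\<theta>}_n(\<omega>_{\<Lambda>_n}); the term \<infinity>\<cdot>1 uses the convention \<infinity>\<cdot>0 = 0.\<close>
definition contrast :: "('b \<Rightarrow> 'a::euclidean_space set \<Rightarrow> 'a set \<Rightarrow> real) \<Rightarrow> ereal \<Rightarrow> 'b
     \<Rightarrow> nat \<Rightarrow> 'a set \<Rightarrow> ereal" where
  "contrast H \<delta> \<theta> n \<omega> =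
     (if min_dist (\<omega> \<inter> Lam n) < \<delta> then \<infinity>
      else ereal (ln (enn2real (Zfree H \<delta> \<theta> (Lam n))) / measure lborel (Lam n :: 'a set)
                  + H \<theta> (Lam n) (\<omega> \<inter> Lam n) / measure lborel (Lam n :: 'a set)))"

definition delta_hat :: "ereal \<Rightarrow> ereal \<Rightarrow> nat \<Rightarrow> 'a::euclidean_space set \<Rightarrow> ereal" where
  "delta_hat dmin dmax n \<omega> =
     (if min_dist (\<omega> \<inter> Lam n) \<in> {dmin..dmax} then min_dist (\<omega> \<inter> Lam n) else dmax)"

end

theory Submission
  imports Defs
begin


lemma space_conf: "space conf_space = Conf"
  unfolding conf_space_def by (simp add: space_measure_of_conv)

lemma sets_conf: "sets conf_space = sigma_sets Conf {{\<omega>\<in>Conf. Ncount B \<omega> = k} | B k. B \<in> sets borel \<and> bounded B}"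
  unfolding conf_space_def by (rule sets_measure_of) auto

lemma sets_pois: "sets (pois L) = sets conf_space"
  unfolding pois_def by (rule sets.sets_measure_of_eq)

lemma space_pois: "space (pois L) = Conf"
  unfolding pois_def by (simp add: space_measure_of_conv space_conf)

lemma count_meas: "B \<in> sets borel \<Longrightarrow> bounded B \<Longrightarrow> {\<omega>\<in>Conf. Ncount B \<omega> = k} \<in> sets conf_space"
  unfolding sets_conf by (rule sigma_sets.Basic) blast

lemma pois_null:
  fixes L :: "'a::euclidean_space set"
  assumes "closed L"
  shows "AE \<omega> in pois L. \<omega> \<subseteq> L"
proof -
  define N where "N = (\<Union>m::nat. Conf - {\<omega>\<in>Conf. Ncount (cball (0::'a) (real m) - L) \<omega> = 0})"
  have Nm: "N \<in> sets conf_space"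
  proof -
    have C: "Conf \<in> sets conf_space" using sets.top[of conf_space] by (simp add: space_conf)
    have "\<And>m::nat. Conf - {\<omega>\<in>Conf. Ncount (cball (0::'a) (real m) - L) \<omega> = 0} \<in> sets conf_space"
    proof (rule sets.Diff[OF C], rule count_meas)
      fix m :: nat
      show "cball (0::'a) (real m) - L \<in> sets borel" by (intro sets.Diff borel_closed assms closed_cball)
      show "bounded (cball (0::'a) (real m) - L)" by (rule bounded_subset[OF bounded_cball]) blast
    qed
    thus ?thesis unfolding N_def by (intro sets.countable_UN) (simp add: image_subset_iff)
  qed
  have sub: "{\<omega> \<in> space (pois L). \<not> \<omega> \<subseteq> L} \<subseteq> N"
  proof
    fix \<omega> assume "\<omega> \<in> {\<omega> \<in> space (pois L). \<not> \<omega> \<subseteq> L}"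
    hence c0: "\<omega> \<in> space (pois L)" and "\<not> \<omega> \<subseteq> L" by blast+
    have c: "\<omega> \<in> Conf" using c0 unfolding space_pois .
    from \<open>\<not> \<omega> \<subseteq> L\<close> obtain p where p: "p \<in> \<omega>" "p \<notin> L" by blast
    obtain m :: nat where m: "norm p \<le> real m" using real_arch_simple by blast
    have fin: "finite (\<omega> \<inter> (cball 0 (real m) - L))"
    proof -
      have "bounded (cball (0::'a) (real m) - L)" by (rule bounded_subset[OF bounded_cball]) blast
      thus ?thesis using c unfolding Conf_def locally_finite_conf_def by blast
    qed
    have "p \<in> \<omega> \<inter> (cball 0 (real m) - L)" using p m by auto
    hence ne: "\<omega> \<inter> (cball 0 (real m) - L) \<noteq> {}" by blast
    have "Ncount (cball 0 (real m) - L) \<omega> \<noteq> 0" unfolding Ncount_def using card_0_eq[OF fin] ne by argo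
    hence "\<omega> \<in> Conf - {\<omega>\<in>Conf. Ncount (cball (0::'a) (real m) - L) \<omega> = 0}" using c by blast
    thus "\<omega> \<in> N" unfolding N_def by (rule UN_I[OF UNIV_I])
  qed
  have "emeasure (pois L) N = 0"
  proof -
    define mu where "mu = (\<lambda>A. ennreal (exp (- measure lborel L)) *
        (\<Sum>k. emeasure (PiM {..<k} (\<lambda>_. restrict_space lborel L))
                 ((\<lambda>x. x ` {..<k}) -` A \<inter> space (PiM {..<k} (\<lambda>_. restrict_space lborel L)))
               / ennreal (fact k)))"
    have e: "pois L = measure_of (space conf_space) (sets conf_space) mu"
      unfolding pois_def mu_def ..
    have emp: "\<And>k. (\<lambda>x. x ` {..<k}) -` N \<inter> space (PiM {..<k} (\<lambda>_. restrict_space lborel L)) = {}"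
    proof -
      fix k
      { fix x assume x: "x \<in> space (PiM {..<k} (\<lambda>_. restrict_space lborel L))" "x ` {..<k} \<in> N"
        have "x ` {..<k} \<subseteq> L" using x(1) by (auto simp: space_PiM space_restrict_space PiE_iff)
        moreover have "\<not> x ` {..<k} \<subseteq> L"
        proof -
          from x(2) obtain m :: nat where "Ncount (cball 0 (real m) - L) (x ` {..<k}) \<noteq> 0"
            unfolding N_def by blast
          thus ?thesis unfolding Ncount_def by (metis Diff_iff card.empty disjoint_iff subsetD)
        qed
        ultimately have False by blast }
      thus "(\<lambda>x. x ` {..<k}) -` N \<inter> space (PiM {..<k} (\<lambda>_. restrict_space lborel L)) = {}" by blast
    qed
    have m0: "mu N = 0" unfolding mu_def emp by simp
    show ?thesis unfolding e emeasure_measure_of_conv using m0 by simp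
  qed
  then show ?thesis using AE_I[OF sub _ ] Nm sets_pois by blast
qed




lemma lattice_idx_sub:
  "lattice_idx n \<subseteq> (\<lambda>f. \<Sum>b\<in>Basis. real_of_int (f b) *\<^sub>R b) ` (PiE Basis (\<lambda>_. {-int n..int n - 1}) :: ('a::euclidean_space \<Rightarrow> int) set)"
proof
  fix i :: 'a assume i: "i \<in> lattice_idx n"
  define f where "f = restrict (\<lambda>b. \<lfloor>i \<bullet> b\<rfloor>) Basis"
  have ib: "\<And>b. b \<in> Basis \<Longrightarrow> i \<bullet> b \<in> \<int> \<and> - real n \<le> i \<bullet> b \<and> i \<bullet> b \<le> real n - 1"
    using i unfolding lattice_idx_def by blast
  have fl: "\<And>b. b \<in> Basis \<Longrightarrow> real_of_int \<lfloor>i \<bullet> b\<rfloor> = i \<bullet> b"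
    using ib by (metis Ints_cases floor_of_int)
  have "f \<in> PiE Basis (\<lambda>_. {-int n..int n - 1})"
  proof -
    have "\<And>b. b \<in> Basis \<Longrightarrow> \<lfloor>i \<bullet> b\<rfloor> \<in> {-int n..int n - 1}"
    proof -
      fix b :: 'a assume b: "b \<in> Basis"
      have "real_of_int (-int n) \<le> real_of_int \<lfloor>i \<bullet> b\<rfloor>" using ib[OF b] fl[OF b] by simp
      moreover have "real_of_int \<lfloor>i \<bullet> b\<rfloor> \<le> real_of_int (int n - 1)" using ib[OF b] fl[OF b] by simp
      ultimately show "\<lfloor>i \<bullet> b\<rfloor> \<in> {-int n..int n - 1}" by (simp only: of_int_le_iff atLeastAtMost_iff) 
    qed
    thus ?thesis unfolding f_def by (simp add: restrict_PiE_iff)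
  qed
  moreover have "i = (\<Sum>b\<in>Basis. real_of_int (f b) *\<^sub>R b)"
  proof -
    have "(\<Sum>b\<in>Basis. real_of_int (f b) *\<^sub>R b) = (\<Sum>b\<in>Basis. (i \<bullet> b) *\<^sub>R b)"
      by (rule sum.cong) (simp_all add: f_def fl)
    also have "\<dots> = i" by (rule euclidean_representation)
    finally show ?thesis by simp
  qed
  ultimately show "i \<in> (\<lambda>f. \<Sum>b\<in>Basis. real_of_int (f b) *\<^sub>R b) ` (PiE Basis (\<lambda>_. {-int n..int n - 1}))"
    by blast
qed

lemma card_lattice_idx: "real (card (lattice_idx n :: 'a::euclidean_space set)) \<le> (2 * real n) ^ DIM('a)"
proof -
  let ?P = "PiE Basis (\<lambda>_. {-int n..int n - 1}) :: ('a \<Rightarrow> int) set"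
  have fP: "finite ?P" by (simp add: finite_PiE)
  have "card (lattice_idx n :: 'a set) \<le> card ((\<lambda>f. \<Sum>b\<in>Basis. real_of_int (f b) *\<^sub>R b) ` ?P :: 'a set)"
    by (rule card_mono[OF finite_imageI[OF fP] lattice_idx_sub])
  also have "\<dots> \<le> card ?P" by (rule card_image_le[OF fP])
  also have "card ?P = (2 * n) ^ DIM('a)"
    by (simp add: card_PiE nat_mult_distrib power_mult_distrib)
  finally show ?thesis by (metis of_nat_le_iff of_nat_mult of_nat_numeral of_nat_power)
qed

lemma finite_OmegaT:
  fixes \<omega> :: "'a::euclidean_space set"
  assumes "finite \<omega>"
  shows "\<omega> \<in> OmegaT"
proof -
  have C: "\<omega> \<in> Conf" unfolding Conf_def locally_finite_conf_def using assms by simp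
  define c where "c = real (card \<omega>)"
  have "\<forall>n\<ge>1. (\<Sum>i\<in>lattice_idx n. real (Ncount (cbox i (i + One)) \<omega>) ^ 2)
        \<le> (c^2 + 1) * (2 * real n) ^ DIM('a)"
  proof (intro allI impI)
    fix n :: nat assume "n \<ge> 1"
    have "(\<Sum>i\<in>lattice_idx n. real (Ncount (cbox i (i + One)) \<omega>) ^ 2) \<le> of_nat (card (lattice_idx n :: 'a set)) * c^2"
    proof (rule sum_bounded_above)
      fix i :: 'a
      have "Ncount (cbox i (i + One)) \<omega> \<le> card \<omega>" unfolding Ncount_def by (rule card_mono[OF assms]) blast
      thus "real (Ncount (cbox i (i + One)) \<omega>) ^ 2 \<le> c^2" unfolding c_def by (simp add: power_mono)
    qed
    also have "\<dots> \<le> (2 * real n) ^ DIM('a) * c^2"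
      by (rule mult_right_mono[OF card_lattice_idx]) simp
    also have "\<dots> \<le> (c^2 + 1) * (2 * real n) ^ DIM('a)" by (simp add: algebra_simps)
    finally show "(\<Sum>i\<in>lattice_idx n. real (Ncount (cbox i (i + One)) \<omega>) ^ 2) \<le> (c^2 + 1) * (2 * real n) ^ DIM('a)" .
  qed
  moreover have "c^2 + 1 > 0" by (simp add: add_nonneg_pos)
  ultimately show ?thesis unfolding OmegaT_def using C by blast
qed



lemma usc_seq:
  assumes "usc_on K f" "\<And>k. t k \<in> K" "t0 \<in> K" "t \<longlonglongrightarrow> t0" "f t0 < y"
  shows "eventually (\<lambda>k. f (t k) < y) sequentially"
proof -
  have "\<forall>\<^sub>F z in at t0 within K. f z < y" using assms(1,3,5) unfolding usc_on_def by blast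
  then obtain T where T: "open T" "t0 \<in> T" "\<And>x. x \<in> T \<Longrightarrow> x \<in> K \<Longrightarrow> x \<noteq> t0 \<Longrightarrow> f x < y"
    unfolding eventually_at_topological by blast
  have "eventually (\<lambda>k. t k \<in> T) sequentially" using topological_tendstoD[OF assms(4) T(1,2)] .
  thus ?thesis
  proof (rule eventually_mono)
    fix k assume "t k \<in> T"
    thus "f (t k) < y" using T(3)[of "t k"] assms(2)[of k] assms(5) by (cases "t k = t0") auto
  qed
qed

lemma lsc_seq:
  assumes "lsc_on K f" "\<And>k. t k \<in> K" "t0 \<in> K" "t \<longlonglongrightarrow> t0" "y < f t0"
  shows "eventually (\<lambda>k. y < f (t k)) sequentially"
proof -
  have "\<forall>\<^sub>F z in at t0 within K. y < f z" using assms(1,3,5) unfolding lsc_on_def by blast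
  then obtain T where T: "open T" "t0 \<in> T" "\<And>x. x \<in> T \<Longrightarrow> x \<in> K \<Longrightarrow> x \<noteq> t0 \<Longrightarrow> y < f x"
    unfolding eventually_at_topological by blast
  have "eventually (\<lambda>k. t k \<in> T) sequentially" using topological_tendstoD[OF assms(4) T(1,2)] .
  thus ?thesis
  proof (rule eventually_mono)
    fix k assume "t k \<in> T"
    thus "y < f (t k)" using T(3)[of "t k"] assms(2)[of k] assms(5) by (cases "t k = t0") auto
  qed
qed

lemma inner_simple:
  fixes g :: "'x \<Rightarrow> ennreal"
  assumes s: "simple_function M s" "s \<le> (\<lambda>x. g x * indicator A x)"
  defines "B \<equiv> {x\<in>space M. s x \<noteq> 0}"
  shows "B \<in> sets M" "B \<subseteq> A" "integral\<^sup>S M s \<le> (\<integral>\<^sup>+x. g x * indicator B x \<partial>M)"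
    "emeasure M B = 0 \<Longrightarrow> integral\<^sup>S M s = 0"
proof -
  have sm: "s \<in> borel_measurable M" using s(1) by (rule borel_measurable_simple_function)
  have "{x\<in>space M. s x \<noteq> 0} \<in> sets M" using sm by measurable
  thus "B \<in> sets M" unfolding B_def .
  show "B \<subseteq> A"
  proof
    fix x assume "x \<in> B"
    hence "s x \<noteq> 0" unfolding B_def by blast
    moreover have "s x \<le> g x * indicator A x" using s(2) by (simp add: le_fun_def)
    ultimately show "x \<in> A" by (cases "x \<in> A") auto
  qed
  have "integral\<^sup>S M s = integral\<^sup>N M s" by (rule nn_integral_eq_simple_integral[OF s(1), symmetric])
  also have "\<dots> \<le> (\<integral>\<^sup>+x. g x * indicator B x \<partial>M)"
  proof (rule nn_integral_mono)
    fix x assume x: "x \<in> space M"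
    have le: "s x \<le> g x * indicator A x" using s(2) by (simp add: le_fun_def)
    show "s x \<le> g x * indicator B x"
    proof (cases "s x = 0")
      case True thus ?thesis by simp
    next
      case False
      hence "x \<in> B" using x unfolding B_def by blast
      moreover have "x \<in> A" using \<open>B \<subseteq> A\<close> \<open>x \<in> B\<close> by blast
      ultimately show ?thesis using le by simp
    qed
  qed
  finally show "integral\<^sup>S M s \<le> (\<integral>\<^sup>+x. g x * indicator B x \<partial>M)" .
  assume B0: "emeasure M B = 0"
  have "AE x in M. s x = 0"
    by (rule AE_I[OF _ B0 \<open>B \<in> sets M\<close>]) (auto simp: B_def)
  hence "integral\<^sup>N M s = 0" using nn_integral_0_iff_AE[OF sm] by blast
  thus "integral\<^sup>S M s = 0" using nn_integral_eq_simple_integral[OF s(1)] by simp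
qed

lemma zero_transfer:
  fixes f g :: "'x \<Rightarrow> ennreal"
  assumes fm: "f \<in> borel_measurable M" and fpos: "\<And>x. f x > 0"
    and f0: "(\<integral>\<^sup>+x. f x * indicator A x \<partial>M) = 0"
  shows "(\<integral>\<^sup>+x. g x * indicator A x \<partial>M) = 0"
proof (rule ccontr)
  assume "(\<integral>\<^sup>+x. g x * indicator A x \<partial>M) \<noteq> 0"
  hence "0 < (SUP s \<in> {s. simple_function M s \<and> s \<le> (\<lambda>x. g x * indicator A x)}. integral\<^sup>S M s)"
    unfolding nn_integral_def by (simp add: zero_less_iff_neq_zero)
  then obtain s where s: "simple_function M s" "s \<le> (\<lambda>x. g x * indicator A x)" and sp: "0 < integral\<^sup>S M s"
    unfolding less_SUP_iff by blast
  define B where "B = {x\<in>space M. s x \<noteq> 0}"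
  note I = inner_simple[OF s, folded B_def]
  have Bn: "emeasure M B \<noteq> 0" using I(4) sp by auto
  have Bm: "(\<lambda>x. f x * indicator B x) \<in> borel_measurable M" using fm I(1) by measurable
  have "(\<integral>\<^sup>+x. f x * indicator B x \<partial>M) \<le> (\<integral>\<^sup>+x. f x * indicator A x \<partial>M)"
    using I(2) by (intro nn_integral_mono) (auto simp: indicator_def)
  hence "(\<integral>\<^sup>+x. f x * indicator B x \<partial>M) = 0" using f0 by simp
  hence "AE x in M. f x * indicator B x = 0" using nn_integral_0_iff_AE[OF Bm] by blast
  hence "AE x in M. x \<notin> B" 
    by (rule eventually_mono) (metis fpos indicator_simps(1) mult.comm_neutral not_gr_zero)
  hence "emeasure M B = 0" using AE_iff_measurable[OF I(1), of "\<lambda>x. x \<notin> B"] I(1) sets.sets_into_space by blast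
  thus False using Bn by blast
qed



lemma exp_lsc_pt:
  fixes e :: "'b::topological_space \<Rightarrow> real"
  assumes "usc_on K e" "\<And>k. t k \<in> K" "t0 \<in> K" "t \<longlonglongrightarrow> t0"
  shows "ennreal (exp (- e t0)) \<le> liminf (\<lambda>k. ennreal (exp (- e (t k))))"
  unfolding le_Liminf_iff
proof (intro allI impI)
  fix z assume z: "z < ennreal (exp (- e t0))"
  define z' where "z' = enn2real z"
  have "z \<noteq> top" using z by (metis ennreal_less_top order.strict_trans top.not_eq_extremum)
  hence zz: "z = ennreal z'" "z' \<ge> 0" unfolding z'_def by (simp_all add: ennreal_enn2real_if)
  have "z' < exp (- e t0)" using z zz by (simp add: ennreal_less_iff)
  define q where "q = (z' + exp (- e t0)) / 2"
  have q: "0 < q" "z' < q" "q < exp (- e t0)" using zz \<open>z' < exp (- e t0)\<close> unfolding q_def by auto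
  have "ln q < ln (exp (- e t0))" using q by (subst ln_less_cancel_iff) auto
  hence "e t0 < - ln q" by simp
  from usc_seq[OF assms this] show "\<forall>\<^sub>F k in sequentially. z < ennreal (exp (- e (t k)))"
  proof (rule eventually_mono)
    fix k assume "e (t k) < - ln q"
    hence "exp (ln q) < exp (- e (t k))" by simp
    hence "q < exp (- e (t k))" using q by simp
    thus "z < ennreal (exp (- e (t k)))" using q zz by (simp add: ennreal_less_iff)
  qed
qed

lemma Z_lsc:
  fixes e :: "'b::topological_space \<Rightarrow> 'x \<Rightarrow> real"
  assumes meas: "\<And>k. e (t k) \<in> borel_measurable M" "e t0 \<in> borel_measurable M"
    and usc: "\<And>x. x \<in> A \<Longrightarrow> usc_on K (\<lambda>\<theta>. e \<theta> x)"
    and tK: "\<And>k. t k \<in> K" "t0 \<in> K" "t \<longlonglongrightarrow> t0"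
    and y: "y < (\<integral>\<^sup>+x. ennreal (exp (- e t0 x)) * indicator A x \<partial>M)"
  shows "eventually (\<lambda>k. y < (\<integral>\<^sup>+x. ennreal (exp (- e (t k) x)) * indicator A x \<partial>M)) sequentially"
proof -
  from y obtain s where s: "simple_function M s" "s \<le> (\<lambda>x. ennreal (exp (- e t0 x)) * indicator A x)" and sp: "y < integral\<^sup>S M s"
    unfolding nn_integral_def less_SUP_iff by blast
  define B where "B = {x\<in>space M. s x \<noteq> 0}"
  note I = inner_simple[OF s, folded B_def]
  have "y < (\<integral>\<^sup>+x. ennreal (exp (- e t0 x)) * indicator B x \<partial>M)" by (rule order.strict_trans2[OF sp I(3)])
  also have "\<dots> \<le> (\<integral>\<^sup>+x. liminf (\<lambda>k. ennreal (exp (- e (t k) x)) * indicator B x) \<partial>M)"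
  proof (rule nn_integral_mono)
    fix x assume "x \<in> space M"
    show "ennreal (exp (- e t0 x)) * indicator B x \<le> liminf (\<lambda>k. ennreal (exp (- e (t k) x)) * indicator B x)"
    proof (cases "x \<in> B")
      case True
      hence "x \<in> A" using I(2) by blast
      have "ennreal (exp (- e t0 x)) \<le> liminf (\<lambda>k. ennreal (exp (- e (t k) x)))"
        by (rule exp_lsc_pt[OF usc[OF \<open>x \<in> A\<close>] tK])
      thus ?thesis using True by simp
    next
      case False thus ?thesis by simp
    qed
  qed
  also have "\<dots> \<le> liminf (\<lambda>k. (\<integral>\<^sup>+x. ennreal (exp (- e (t k) x)) * indicator B x \<partial>M))"
    by (rule nn_integral_liminf) (use meas I(1) in measurable)
  finally have "eventually (\<lambda>k. y < (\<integral>\<^sup>+x. ennreal (exp (- e (t k) x)) * indicator B x \<partial>M)) sequentially"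
    by (rule less_LiminfD)
  thus ?thesis
  proof (rule eventually_mono)
    fix k assume "y < (\<integral>\<^sup>+x. ennreal (exp (- e (t k) x)) * indicator B x \<partial>M)"
    also have "\<dots> \<le> (\<integral>\<^sup>+x. ennreal (exp (- e (t k) x)) * indicator A x \<partial>M)"
      using I(2) by (intro nn_integral_mono) (auto simp: indicator_def)
    finally show "y < (\<integral>\<^sup>+x. ennreal (exp (- e (t k) x)) * indicator A x \<partial>M)" .
  qed
qed



definition slsc :: "'b::topological_space set \<Rightarrow> ('b \<Rightarrow> real) \<Rightarrow> bool" where
  "slsc K c \<longleftrightarrow> (\<forall>t t0 y. (\<forall>k. t k \<in> K) \<longrightarrow> t0 \<in> K \<longrightarrow> t \<longlonglongrightarrow> t0 \<longrightarrow> y < c t0 \<longrightarrow>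
      eventually (\<lambda>k. y < c (t k)) sequentially)"

lemma slsc_add:
  assumes "slsc K f" "slsc K g" shows "slsc K (\<lambda>x. f x + g x)"
  unfolding slsc_def
proof (intro allI impI)
  fix t t0 y assume h: "\<forall>k. t k \<in> K" "t0 \<in> K" "t \<longlonglongrightarrow> t0" "y < f t0 + g t0"
  define d where "d = (f t0 + g t0 - y) / 2"
  have d: "d > 0" using h(4) unfolding d_def by simp
  have "eventually (\<lambda>k. f t0 - d < f (t k)) sequentially"
    using assms(1) h(1-3) d unfolding slsc_def by simp
  moreover have "eventually (\<lambda>k. g t0 - d < g (t k)) sequentially"
    using assms(2) h(1-3) d unfolding slsc_def by simp
  ultimately show "eventually (\<lambda>k. y < f (t k) + g (t k)) sequentially"
    by eventually_elim (simp add: d_def field_simps)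
qed

lemma slsc_div:
  assumes "slsc K f" "c \<ge> 0" shows "slsc K (\<lambda>x. f x / c)"
proof (cases "c = 0")
  case True thus ?thesis unfolding slsc_def by simp
next
  case False
  hence c: "c > 0" using assms(2) by simp
  show ?thesis unfolding slsc_def
  proof (intro allI impI)
    fix t t0 y assume h: "\<forall>k. t k \<in> K" "t0 \<in> K" "t \<longlonglongrightarrow> t0" "y < f t0 / c"
    have "y * c < f t0" using h(4) c by (simp add: field_simps)
    hence "eventually (\<lambda>k. y * c < f (t k)) sequentially"
      using assms(1) h(1-3) unfolding slsc_def by blast
    thus "eventually (\<lambda>k. y < f (t k) / c) sequentially"
      by (rule eventually_mono) (use c in \<open>simp add: field_simps\<close>)
  qed
qed

lemma lsc_slsc: "lsc_on K f \<Longrightarrow> slsc K f"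
  unfolding slsc_def using lsc_seq by blast

lemma slsc_min:
  fixes c :: "'b::metric_space \<Rightarrow> real"
  assumes K: "compact K" "K \<noteq> {}" and c: "slsc K c"
  shows "\<exists>t0\<in>K. ereal (c t0) = (INF t\<in>K. ereal (c t))"
proof -
  define m where "m = (INF t\<in>K. ereal (c t))"
  obtain u where u: "\<And>k. u k \<in> (\<lambda>t. ereal (c t)) ` K" "u \<longlonglongrightarrow> m"
    using Inf_as_limit[of "(\<lambda>t. ereal (c t)) ` K"] K(2) unfolding m_def by blast
  obtain t where t: "\<And>k. t k \<in> K" "\<And>k. u k = ereal (c (t k))"
  proof -
    have "\<forall>k. \<exists>x. x \<in> K \<and> u k = ereal (c x)" using u(1) by blast
    then obtain t where "\<forall>k. t k \<in> K \<and> u k = ereal (c (t k))" by (rule choice[THEN exE]) 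
    thus ?thesis using that by blast
  qed
  obtain t0 r where r: "t0 \<in> K" "strict_mono r" "(t \<circ> r) \<longlonglongrightarrow> t0"
    using K(1) t(1) unfolding compact_eq_seq_compact_metric seq_compact_def by metis
  have lim: "(\<lambda>j. ereal (c (t (r j)))) \<longlonglongrightarrow> m"
    using LIMSEQ_subseq_LIMSEQ[OF u(2) r(2)] t(2) by (simp add: o_def)
  have "ereal (c t0) \<le> m"
  proof (rule ccontr)
    assume "\<not> ereal (c t0) \<le> m"
    hence lt: "m < ereal (c t0)" by simp
    from ereal_dense2[OF lt] obtain y where y1: "m < ereal y" and y2: "ereal y < ereal (c t0)" by blast
    have y: "m < ereal y" "y < c t0" using y1 y2 by simp_all
    have "eventually (\<lambda>j. ereal (c (t (r j))) < ereal y) sequentially"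
      using order_tendstoD(2)[OF lim y(1)] .
    moreover have "eventually (\<lambda>j. y < c ((t \<circ> r) j)) sequentially"
    proof -
      have "\<And>k. (t \<circ> r) k \<in> K" using t(1) by simp
      from c[unfolded slsc_def, rule_format, OF this r(1) r(3) y(2)] show ?thesis .
    qed
    ultimately have "eventually (\<lambda>j. False) sequentially"
      by eventually_elim simp
    thus False by simp
  qed
  moreover have "m \<le> ereal (c t0)" unfolding m_def using r(1) by (rule INF_lower)
  ultimately have "ereal (c t0) = m" by (rule antisym)
  thus ?thesis using r(1) unfolding m_def by blast
qed



theorem lemma2:
  fixes H :: "'b::euclidean_space \<Rightarrow> 'a::euclidean_space set \<Rightarrow> 'a set \<Rightarrow> real"
    and \<Theta> K :: "'b set"
    and dmin dmax dstar :: ereal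
    and \<theta>star :: 'b
    and P :: "'a set measure"
    and \<omega>star :: "'a set"
  assumes I: "0 \<le> dmin" "dmin \<le> dmax"
    and Theta: "\<Theta> \<noteq> {}" "K \<subseteq> \<Theta>" "compact K" "K \<noteq> {}"
    and energy: "energy_family \<Theta> H"
    and Existence: "\<forall>\<delta>\<in>{dmin..dmax}. \<forall>\<theta>\<in>\<Theta>.
        (\<forall>\<Lambda> \<omega>. bounded_borel \<Lambda> \<longrightarrow> \<omega> \<in> OmegaHC \<delta> \<inter> OmegaT \<longrightarrow>
             Zcond H \<delta> \<theta> \<Lambda> \<omega> < \<infinity>) \<and> gibbs H \<delta> \<theta> \<noteq> {}"
    and Argmax: "\<forall>n::nat. n \<ge> 1 \<longrightarrow>
        (\<forall>\<omega>\<in>OmegaT. lsc_on K (\<lambda>\<theta>. H \<theta> (Lam n) (\<omega> \<inter> Lam n))) \<and>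
        (\<exists>Ht :: 'b \<Rightarrow> 'a set \<Rightarrow> real.
            (\<forall>\<omega>\<in>OmegaT. usc_on K (\<lambda>\<theta>. Ht \<theta> \<omega>)) \<and>
            (\<forall>\<theta>\<in>K. Ht \<theta> \<in> borel_measurable conf_space \<and>
                 (AE \<omega> in pois (Lam n). Ht \<theta> \<omega> = H \<theta> (Lam n) \<omega>)))"
    and truth: "dstar \<in> {dmin..dmax}" "\<theta>star \<in> \<Theta>" "P \<in> gibbs H dstar \<theta>star"
    and realization: "\<omega>star \<in> OmegaHC dstar \<inter> OmegaT"
  shows "\<forall>n::nat. n \<ge> 1 \<longrightarrow>
     (\<exists>\<theta>hat\<in>K. contrast H (delta_hat dmin dmax n \<omega>star) \<theta>hat n \<omega>star
                = (INF \<theta>\<in>K. contrast H (delta_hat dmin dmax n \<omega>star) \<theta> n \<omega>star))"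
proof (intro allI impI)
  fix n :: nat assume n: "n \<ge> 1"
  define \<delta> where "\<delta> = delta_hat dmin dmax n \<omega>star"
  define L where "L = (Lam n :: 'a set)"
  have \<delta>I: "\<delta> \<in> {dmin..dmax}" unfolding \<delta>_def delta_hat_def using I(2) by auto
  have Lc: "closed L" unfolding L_def Lam_def by (rule closed_cbox)
  have Lb: "bounded L" unfolding L_def Lam_def by (rule bounded_cbox)
  have Lbb: "bounded_borel L" unfolding bounded_borel_def using Lc Lb borel_closed by blast
  have "\<exists>\<theta>hat\<in>K. contrast H \<delta> \<theta>hat n \<omega>star
                = (INF \<theta>\<in>K. contrast H \<delta> \<theta> n \<omega>star)"
  proof (cases "min_dist (\<omega>star \<inter> Lam n) < \<delta>")
    case True
    hence inf: "\<And>\<theta>. contrast H \<delta> \<theta> n \<omega>star = \<infinity>" unfolding contrast_def by simp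
    obtain \<theta>1 where "\<theta>1 \<in> K" using Theta(4) by blast
    moreover have "(INF \<theta>\<in>K. contrast H \<delta> \<theta> n \<omega>star) = \<infinity>" unfolding inf using Theta(4) by simp
    ultimately show ?thesis unfolding inf by auto
  next
    case False
    define Z where "Z = (\<lambda>\<theta>. Zfree H \<delta> \<theta> L)"
    define mL where "mL = measure lborel L"
    define c where "c = (\<lambda>\<theta>. ln (enn2real (Z \<theta>)) / mL + H \<theta> L (\<omega>star \<inter> L) / mL)"
    have contr: "\<And>\<theta>. contrast H \<delta> \<theta> n \<omega>star = ereal (c \<theta>)"
      using False unfolding contrast_def c_def Z_def L_def mL_def by simp
    from Argmax n obtain Ht :: "'b \<Rightarrow> 'a set \<Rightarrow> real" where
      Hlsc: "\<forall>\<omega>\<in>OmegaT. lsc_on K (\<lambda>\<theta>. H \<theta> L (\<omega> \<inter> L))" and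
      Htusc: "\<forall>\<omega>\<in>OmegaT. usc_on K (\<lambda>\<theta>. Ht \<theta> \<omega>)" and
      Htm: "\<forall>\<theta>\<in>K. Ht \<theta> \<in> borel_measurable conf_space \<and> (AE \<omega> in pois L. Ht \<theta> \<omega> = H \<theta> L \<omega>)"
      unfolding L_def by blast
    define A where "A = (OmegaHC \<delta> \<inter> OmegaT :: 'a set set)"
    have Hm: "\<And>\<theta>. \<theta> \<in> K \<Longrightarrow> Ht \<theta> \<in> borel_measurable (pois L)"
      using Htm measurable_cong_sets[OF sets_pois[symmetric] refl] by blast
    have Zrep: "\<And>\<theta>. \<theta> \<in> K \<Longrightarrow> Z \<theta> = (\<integral>\<^sup>+\<omega>. ennreal (exp (- Ht \<theta> \<omega>)) * indicator A \<omega> \<partial>pois L)"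
    proof -
      fix \<theta> assume \<theta>: "\<theta> \<in> K"
      have ae1: "AE \<omega> in pois L. \<omega> \<subseteq> L" by (rule pois_null[OF Lc])
      have ae2: "AE \<omega> in pois L. Ht \<theta> \<omega> = H \<theta> L \<omega>" using Htm \<theta> by blast
      have ae3: "AE \<omega> in pois L. \<omega> \<in> space (pois L)" by (rule AE_space)
      show "Z \<theta> = (\<integral>\<^sup>+\<omega>. ennreal (exp (- Ht \<theta> \<omega>)) * indicator A \<omega> \<partial>pois L)"
        unfolding Z_def Zfree_def
      proof (rule nn_integral_cong_AE)
        show "AE \<omega> in pois L. ennreal (exp (- H \<theta> L (\<omega> \<inter> L))) * indicator (OmegaHC \<delta>) (\<omega> \<inter> L)
              = ennreal (exp (- Ht \<theta> \<omega>)) * indicator A \<omega>"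
          using ae1 ae2 ae3
        proof eventually_elim
          fix \<omega> assume h: "\<omega> \<subseteq> L" "Ht \<theta> \<omega> = H \<theta> L \<omega>" "\<omega> \<in> space (pois L)"
          have wl: "\<omega> \<inter> L = \<omega>" using h(1) by blast
          have "\<omega> \<in> Conf" using h(3) unfolding space_pois .
          hence "finite \<omega>" using Lb h(1) unfolding Conf_def locally_finite_conf_def
            by (metis mem_Collect_eq wl)
          hence "\<omega> \<in> OmegaT" by (rule finite_OmegaT)
          hence ind: "indicator (OmegaHC \<delta>) \<omega> = (indicator A \<omega> :: ennreal)"
            unfolding A_def by (simp add: indicator_def)
          show "ennreal (exp (- H \<theta> L (\<omega> \<inter> L))) * indicator (OmegaHC \<delta>) (\<omega> \<inter> L)
              = ennreal (exp (- Ht \<theta> \<omega>)) * indicator A \<omega>"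
            unfolding wl ind h(2) ..
        qed
      qed
    qed
    have Zfin: "\<And>\<theta>. \<theta> \<in> K \<Longrightarrow> Z \<theta> < \<infinity>"
    proof -
      fix \<theta> assume \<theta>: "\<theta> \<in> K"
      have e1: "{} \<in> OmegaHC \<delta> \<inter> OmegaT" unfolding OmegaHC_def using finite_OmegaT[of "{}"] by simp
      have "Zcond H \<delta> \<theta> L {} < \<infinity>" using Existence \<delta>I \<theta> Theta(2) Lbb e1 by blast
      moreover have "Zcond H \<delta> \<theta> L {} = Z \<theta>" unfolding Zcond_def Z_def Zfree_def by simp
      ultimately show "Z \<theta> < \<infinity>" by simp
    qed
    have Zlsc: "\<And>t t0 y. (\<And>k. t k \<in> K) \<Longrightarrow> t0 \<in> K \<Longrightarrow> t \<longlonglongrightarrow> t0 \<Longrightarrow> y < Z t0 \<Longrightarrow>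
        eventually (\<lambda>k. y < Z (t k)) sequentially"
    proof -
      fix t t0 y assume h: "\<And>k. t k \<in> K" "t0 \<in> K" "t \<longlonglongrightarrow> t0" "y < Z t0"
      have usc: "\<And>x. x \<in> A \<Longrightarrow> usc_on K (\<lambda>\<theta>. Ht \<theta> x)" using Htusc unfolding A_def by blast
      have "y < (\<integral>\<^sup>+x. ennreal (exp (- Ht t0 x)) * indicator A x \<partial>pois L)" using h(4) Zrep[OF h(2)] by simp
      from Z_lsc[OF Hm[OF h(1)] Hm[OF h(2)] usc h(1) h(2) h(3) this]
      show "eventually (\<lambda>k. y < Z (t k)) sequentially" using Zrep[OF h(1)] by simp
    qed
    have Z0: "\<And>t0 \<theta>. t0 \<in> K \<Longrightarrow> \<theta> \<in> K \<Longrightarrow> Z t0 = 0 \<Longrightarrow> Z \<theta> = 0"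
    proof -
      fix t0 \<theta> assume h: "t0 \<in> K" "\<theta> \<in> K" "Z t0 = 0"
      have fm: "(\<lambda>x. ennreal (exp (- Ht t0 x))) \<in> borel_measurable (pois L)"
        using Hm[OF h(1)] by measurable
      have "(\<integral>\<^sup>+x. ennreal (exp (- Ht \<theta> x)) * indicator A x \<partial>pois L) = 0"
        by (rule zero_transfer[OF fm]) (use h Zrep in simp_all)
      thus "Z \<theta> = 0" using Zrep[OF h(2)] by simp
    qed
    have slZ: "slsc K (\<lambda>\<theta>. ln (enn2real (Z \<theta>)))"
      unfolding slsc_def
    proof (intro allI impI)
      fix t t0 y assume h: "\<forall>k. t k \<in> K" "t0 \<in> K" "t \<longlonglongrightarrow> t0" "y < ln (enn2real (Z t0))"
      show "eventually (\<lambda>k. y < ln (enn2real (Z (t k)))) sequentially"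
      proof (cases "Z t0 = 0")
        case True
        hence "\<And>k. Z (t k) = 0" using Z0 h(1,2) by blast
        thus ?thesis using h(4) True by simp
      next
        case False
        define r0 where "r0 = enn2real (Z t0)"
        have Zr: "Z t0 = ennreal r0" "r0 > 0" using False Zfin[OF h(2)] unfolding r0_def
          by (simp_all add: enn2real_positive_iff less_top[symmetric] zero_less_iff_neq_zero)
        have "exp y < r0" using h(4) Zr(2) unfolding r0_def[symmetric] by (metis exp_less_cancel_iff exp_ln)
        hence "ennreal (exp y) < Z t0" using Zr by (simp add: ennreal_less_iff)
        from Zlsc[OF _ h(2) h(3) this] h(1)
        have "eventually (\<lambda>k. ennreal (exp y) < Z (t k)) sequentially" by blast
        thus ?thesis
        proof (rule eventually_mono)
          fix k assume lt: "ennreal (exp y) < Z (t k)"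
          have fin: "Z (t k) < \<infinity>" using Zfin h(1) by blast
          have "exp y < enn2real (Z (t k))" using lt fin
            by (metis enn2real_ennreal ennreal_enn2real ennreal_less_iff exp_ge_zero infinity_ennreal_def less_le_not_le)
          thus "y < ln (enn2real (Z (t k)))" by (metis exp_gt_zero exp_less_cancel_iff exp_ln order.strict_trans)
        qed
      qed
    qed
    have mL: "mL \<ge> 0" unfolding mL_def by simp
    have slH: "slsc K (\<lambda>\<theta>. H \<theta> L (\<omega>star \<inter> L))"
      using Hlsc realization lsc_slsc by blast
    have "slsc K c" unfolding c_def
      by (rule slsc_add[OF slsc_div[OF slZ mL] slsc_div[OF slH mL]])
    from slsc_min[OF Theta(3,4) this] obtain t0 where "t0 \<in> K" "ereal (c t0) = (INF t\<in>K. ereal (c t))"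
      by blast
    thus ?thesis unfolding contr by blast
  qed
  thus "\<exists>\<theta>hat\<in>K. contrast H (delta_hat dmin dmax n \<omega>star) \<theta>hat n \<omega>star
                = (INF \<theta>\<in>K. contrast H (delta_hat dmin dmax n \<omega>star) \<theta> n \<omega>star)"
    unfolding \<delta>_def .
qed


end
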